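(* Let $\Omega$ be a bounded strictly convex planar domain with $\mathcal{C}^1$ boundary, axially symmetric with respect to a line, and let $O$ be one of the two points of $\partial\Omega$ on the symmetry axis. Let $q\ge2$ and let $\mathcal{P}^{(q)}$ be the set of convex $q$-gons $(p_0,\dots,p_{q-1})$ with vertices on $\partial\Omega$ in positive cyclic order, symmetric with respect to the axis, and with $p_0=O$. If $\underline{p}^{(\Omega,q)}\in\mathcal{P}^{(q)}$ maximizes the area among all polygons in $\mathcal{P}^{(q)}$, then its vertices form a $q$-periodic orbit of the symplectic billiard in $\Omega$.
   Context: Symplectic billiard in $\Omega$: a chord $(q_1,q_2)$ of $\partial\Omega$ is sent to $(q_2,q_3)$ where $q_3\in\partial\Omega$ is such that the line $q_1q_3$ is parallel to the tangent line to $\partial\Omega$ at $q_2$. A $q$-periodic orbit is a cyclic sequence $p_0,\dots,p_{q-1}$ of boundary points such that every triple $(p_{j-1},p_j,p_{j+1})$ (indices mod $q$) consists of consecutive bounces. *)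

theory Defs
  imports "HOL-Analysis.Analysis"
begin

definition det2 :: "real^2 \<Rightarrow> real^2 \<Rightarrow> real" where
  "det2 v w = v$1 * w$2 - v$2 * w$1"

definition strictly_convex_domain :: "(real^2) set \<Rightarrow> bool" where
  "strictly_convex_domain \<Omega> \<longleftrightarrow> open \<Omega> \<and> \<Omega> \<noteq> {} \<and> bounded \<Omega> \<and> convex \<Omega> \<and>
     (\<forall>x\<in>closure \<Omega>. \<forall>y\<in>closure \<Omega>. x \<noteq> y \<longrightarrow> open_segment x y \<subseteq> \<Omega>)"

definition C1_boundary_param ::
  "(real^2) set \<Rightarrow> (real \<Rightarrow> real^2) \<Rightarrow> (real \<Rightarrow> real^2) \<Rightarrow> bool" where
  "C1_boundary_param \<Omega> \<gamma> \<gamma>' \<longleftrightarrow>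
     (\<forall>t. (\<gamma> has_vector_derivative \<gamma>' t) (at t)) \<and> continuous_on UNIV \<gamma>' \<and>
     (\<forall>t. \<gamma>' t \<noteq> 0) \<and> (\<forall>t. \<gamma> (t + 1) = \<gamma> t) \<and>
     inj_on \<gamma> {0..<1} \<and> \<gamma> ` {0..<1} = frontier \<Omega>"

definition reflection_line :: "real^2 \<Rightarrow> real^2 \<Rightarrow> real^2 \<Rightarrow> real^2" where
  "reflection_line a u x = a + (2 * ((x - a) \<bullet> u)) *\<^sub>R u - (x - a)"

definition axially_symmetric :: "(real^2) set \<Rightarrow> real^2 \<Rightarrow> real^2 \<Rightarrow> bool" where
  "axially_symmetric \<Omega> a u \<longleftrightarrow> norm u = 1 \<and> reflection_line a u ` \<Omega> = \<Omega>"

text \<open>Area of the polygon p 0, ..., p (q-1) (shoelace formula; positive for counterclockwise order).\<close>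
definition polygon_area :: "nat \<Rightarrow> (nat \<Rightarrow> real^2) \<Rightarrow> real" where
  "polygon_area q p = (1/2) * (\<Sum>j<q. det2 (p j) (p ((j + 1) mod q)))"

text \<open>The class P^(q): convex q-gons with vertices on the boundary in positive cyclic order
  (distinct vertices, every triple i<j<k positively oriented), symmetric with respect to the axis,
  and with p 0 = P0.\<close>
definition sym_polygons ::
  "(real^2) set \<Rightarrow> real^2 \<Rightarrow> real^2 \<Rightarrow> real^2 \<Rightarrow> nat \<Rightarrow> (nat \<Rightarrow> real^2) set" where
  "sym_polygons \<Omega> a u P0 q = {p.
     (\<forall>j<q. p j \<in> frontier \<Omega>) \<and> inj_on p {..<q} \<and>
     (\<forall>i j k. i < j \<and> j < k \<and> k < q \<longrightarrow> det2 (p j - p i) (p k - p i) > 0) \<and>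
     reflection_line a u ` (p ` {..<q}) = p ` {..<q} \<and>
     p 0 = P0}"

text \<open>(q1,q2) is sent to (q2,q3) by the symplectic billiard: q3 lies on the line through q1
  parallel to the tangent at q2, and q3 is the second intersection point of that line with the
  boundary (q3 = q1 only if that line is tangent at q1).\<close>
definition consecutive_bounces ::
  "(real^2) set \<Rightarrow> (real \<Rightarrow> real^2) \<Rightarrow> (real \<Rightarrow> real^2) \<Rightarrow> real^2 \<Rightarrow> real^2 \<Rightarrow> real^2 \<Rightarrow> bool" where
  "consecutive_bounces \<Omega> \<gamma> \<gamma>' q1 q2 q3 \<longleftrightarrow>
     q1 \<in> frontier \<Omega> \<and> q2 \<in> frontier \<Omega> \<and> q3 \<in> frontier \<Omega> \<and> q1 \<noteq> q2 \<and> q2 \<noteq> q3 \<and>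
     (\<exists>t. \<gamma> t = q2 \<and> det2 (q3 - q1) (\<gamma>' t) = 0 \<and>
        (q3 = q1 \<longrightarrow> (\<exists>s. \<gamma> s = q1 \<and> det2 (\<gamma>' s) (\<gamma>' t) = 0)))"

definition symplectic_periodic_orbit ::
  "(real^2) set \<Rightarrow> (real \<Rightarrow> real^2) \<Rightarrow> (real \<Rightarrow> real^2) \<Rightarrow> nat \<Rightarrow> (nat \<Rightarrow> real^2) \<Rightarrow> bool" where
  "symplectic_periodic_orbit \<Omega> \<gamma> \<gamma>' q p \<longleftrightarrow>
     (\<forall>j<q. consecutive_bounces \<Omega> \<gamma> \<gamma>' (p ((j + q - 1) mod q)) (p j) (p ((j + 1) mod q)))"

end

theory Submission
  imports Defs
begin


lemma inner2: "(x::real^2) \<bullet> y = x$1*y$1 + x$2*y$2"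
  by (simp add: inner_vec_def sum_2)

lemma refl_comp: "reflection_line a u x $ c = a$c + 2*((x-a)\<bullet>u)*u$c - (x$c - a$c)"
  by (simp add: reflection_line_def)

lemma refl_inner: "norm u = 1 \<Longrightarrow> (reflection_line a u x - a) \<bullet> u = (x - a) \<bullet> u"
  by (simp add: reflection_line_def inner_diff_left inner_add_left norm_eq_1)


definition Lin :: "real^2 \<Rightarrow> real^2 \<Rightarrow> real^2" where
  "Lin u v = (2 * (v \<bullet> u)) *\<^sub>R u - v"

lemma refl_diff: "reflection_line a u x - reflection_line a u y = Lin u (x - y)"
  by (simp add: reflection_line_def Lin_def algebra_simps inner_diff_left)

lemma refl_aff: "reflection_line a u x = a + Lin u (x - a)"
  by (simp add: reflection_line_def Lin_def)

lemma Lin_inner: "norm u = 1 \<Longrightarrow> Lin u v \<bullet> u = v \<bullet> u"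
  by (simp add: Lin_def inner_diff_left norm_eq_1)

lemma Lin_invol: "norm u = 1 \<Longrightarrow> Lin u (Lin u v) = v"
  using Lin_inner[of u v] unfolding Lin_def[of u "Lin u v"] by (simp add: Lin_def)

lemma refl_invol: "norm u = 1 \<Longrightarrow> reflection_line a u (reflection_line a u x) = x"
  by (simp add: refl_aff[of a u] Lin_invol)

lemma det2_Lin: "norm u = 1 \<Longrightarrow> det2 (Lin u v) (Lin u w) = - det2 v w"
proof -
  assume "norm u = 1"
  hence n: "u$1*u$1 + u$2*u$2 = 1" by (simp add: norm_eq_1 inner2)
  have "det2 (Lin u v) (Lin u w) = (1 - 2*(u$1*u$1 + u$2*u$2)) * det2 v w"
    by (simp add: det2_def Lin_def inner2 algebra_simps)
  thus ?thesis using n by simp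
qed

lemma det2_add_left: "det2 (x + y) z = det2 x z + det2 y z" by (simp add: det2_def algebra_simps)
lemma det2_add_right: "det2 z (x + y) = det2 z x + det2 z y" by (simp add: det2_def algebra_simps)
lemma det2_diff_left: "det2 (x - y) z = det2 x z - det2 y z" by (simp add: det2_def algebra_simps)
lemma det2_diff_right: "det2 z (x - y) = det2 z x - det2 z y" by (simp add: det2_def algebra_simps)
lemma det2_swap: "det2 x y = - det2 y x" by (simp add: det2_def algebra_simps)

lemma det2_perp: assumes "v \<bullet> u = 0" "w \<bullet> u = 0" "u \<noteq> 0" shows "det2 v w = 0"
proof -
  have a: "v$1*u$1 + v$2*u$2 = 0" "w$1*u$1 + w$2*u$2 = 0" using assms by (simp_all add: inner2)
  have b: "v$1*u$1 = -(v$2*u$2)" "w$1*u$1 = -(w$2*u$2)" "v$2*u$2 = -(v$1*u$1)" "w$2*u$2 = -(w$1*u$1)"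
    using a by linarith+
  have "u$1 * det2 v w = 0"
  proof -
    have "u$1 * det2 v w = w$2*(v$1*u$1) - v$2*(w$1*u$1)" by (simp add: det2_def algebra_simps)
    also have "\<dots> = w$2*(-(v$2*u$2)) - v$2*(-(w$2*u$2))" by (simp only: b(1,2))
    finally show ?thesis by (simp add: algebra_simps)
  qed
  moreover have "u$2 * det2 v w = 0"
  proof -
    have "u$2 * det2 v w = v$1*(w$2*u$2) - w$1*(v$2*u$2)" by (simp add: det2_def algebra_simps)
    also have "\<dots> = v$1*(-(w$1*u$1)) - w$1*(-(v$1*u$1))" by (simp only: b(3,4))
    finally show ?thesis by (simp add: algebra_simps)
  qed
  moreover have "u$1 \<noteq> 0 \<or> u$2 \<noteq> 0" using assms(3) by (simp add: vec_eq_iff forall_2)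
  ultimately show ?thesis by (metis mult_eq_0_iff)
qed



lemma sym_index:
  fixes p :: "nat \<Rightarrow> real^2" and f :: "real^2 \<Rightarrow> real^2"
  assumes inj: "inj_on p {..<q}" and finj: "inj f"
    and pos: "\<forall>i j k. i < j \<and> j < k \<and> k < q \<longrightarrow> det2 (p j - p i) (p k - p i) > 0"
    and img: "f ` (p ` {..<q}) = p ` {..<q}" and f0: "f (p 0) = p 0"
    and rev: "\<And>x y z. det2 (f y - f x) (f z - f x) = - det2 (y - x) (z - x)"
    and q: "q > 0"
  shows "\<forall>i<q. f (p i) = p ((q - i) mod q)"
proof -
  have "\<forall>i\<in>{..<q}. \<exists>k\<in>{..<q}. p k = f (p i)" proof
    fix i assume "i \<in> {..<q}"
    hence "f (p i) \<in> f ` (p ` {..<q})" by blast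
    thus "\<exists>k\<in>{..<q}. p k = f (p i)" using img by (metis imageE)
  qed
  then obtain \<sigma> where \<sigma>: "\<forall>i\<in>{..<q}. \<sigma> i \<in> {..<q} \<and> p (\<sigma> i) = f (p i)"
    by metis
  have s0: "\<sigma> 0 = 0" using \<sigma> f0 q inj by (metis inj_on_def lessThan_iff)
  have sinj': "i = i'" if "i < q" "i' < q" and "\<sigma> i = \<sigma> i'" for i i'
  proof -
    have "f (p i) = f (p i')" using that \<sigma> by (metis lessThan_iff)
    hence "p i = p i'" using finj by (simp add: inj_def)
    thus ?thesis using inj that by (simp add: inj_on_def)
  qed
  have snz: "\<sigma> i \<noteq> 0" if "0 < i" "i < q" for i
    using sinj'[of i 0] that s0 q by auto
  have dec: "\<sigma> i' < \<sigma> i" if "0 < i" "i < i'" "i' < q" for i i'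
  proof (rule ccontr)
    assume "\<not> \<sigma> i' < \<sigma> i"
    moreover have "\<sigma> i \<noteq> \<sigma> i'" using sinj'[of i i'] that by auto
    ultimately have lt: "\<sigma> i < \<sigma> i'" by simp
    have "0 < \<sigma> i" using snz that by auto
    moreover have "\<sigma> i' < q" using \<sigma> that by auto
    ultimately have "det2 (p (\<sigma> i) - p 0) (p (\<sigma> i') - p 0) > 0" using pos lt by blast
    also have "det2 (p (\<sigma> i) - p 0) (p (\<sigma> i') - p 0) = det2 (f (p i) - f (p 0)) (f (p i') - f (p 0))"
      using \<sigma> that f0 by auto
    also have "\<dots> = - det2 (p i - p 0) (p i' - p 0)" by (rule rev)
    finally have "det2 (p i - p 0) (p i' - p 0) < 0" by simp
    moreover have "det2 (p i - p 0) (p i' - p 0) > 0" using pos that by blast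
    ultimately show False by simp
  qed
  have main: "\<sigma> i = q - i" if "0 < i" "i < q" for i
  proof -
    have injA: "inj_on \<sigma> {i<..<q}" by (intro inj_onI) (use sinj' in auto)
    have "\<sigma> ` {i<..<q} \<subseteq> {0<..<\<sigma> i}" using dec snz that by auto
    hence "card (\<sigma> ` {i<..<q}) \<le> card {0<..<\<sigma> i}" by (intro card_mono) auto
    hence c1: "q - 1 - i \<le> \<sigma> i - 1" using card_image[OF injA] by simp
    have injB: "inj_on \<sigma> {0<..<i}" by (intro inj_onI) (use sinj' that in auto)
    have "\<sigma> ` {0<..<i} \<subseteq> {\<sigma> i<..<q}" using dec \<sigma> that by auto
    hence "card (\<sigma> ` {0<..<i}) \<le> card {\<sigma> i<..<q}" by (intro card_mono) auto
    hence c2: "i - 1 \<le> q - 1 - \<sigma> i" using card_image[OF injB] by simp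
    have "\<sigma> i < q" "\<sigma> i > 0" using \<sigma> snz that by auto
    thus ?thesis using c1 c2 that by linarith
  qed
  show ?thesis
  proof (intro allI impI)
    fix i assume i: "i < q"
    show "f (p i) = p ((q - i) mod q)"
    proof (cases "i = 0")
      case True thus ?thesis using f0 by simp
    next
      case False
      hence "(q - i) mod q = q - i" using i by simp
      moreover have "p (\<sigma> i) = f (p i)" using \<sigma> i by auto
      ultimately show ?thesis using main[of i] i False by auto
    qed
  qed
qed



lemma next_eq: "(i::nat) < q \<Longrightarrow> (i + 1) mod q = (if i + 1 = q then 0 else i + 1)"
proof -
  assume i: "i < q"
  show ?thesis
  proof (cases "i + 1 = q")
    case True thus ?thesis by simp
  next
    case False hence "i + 1 < q" using i by simp
    thus ?thesis using False by simp
  qed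
qed
lemma prev_eq: "(i::nat) < q \<Longrightarrow> (i + q - 1) mod q = (if i = 0 then q - 1 else i - 1)"
proof -
  assume i: "i < q"
  show ?thesis
  proof (cases "i = 0")
    case True 
    have "q - 1 < q" using i by simp
    thus ?thesis using True by simp
  next
    case False
    hence "i + q - 1 = (i - 1) + q" by simp
    hence "(i + q - 1) mod q = (i - 1) mod q" by simp
    moreover have "i - 1 < q" using i by simp
    ultimately show ?thesis using False by simp
  qed
qed
lemma sig_eq: "(i::nat) < q \<Longrightarrow> (q - i) mod q = (if i = 0 then 0 else q - i)"
proof -
  assume i: "i < q"
  show ?thesis
  proof (cases "i = 0")
    case True thus ?thesis by simp
  next
    case False hence "q - i < q" using i by simp
    thus ?thesis using False by simp
  qed
qed

lemma idx_facts:
  fixes q i :: nat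
  assumes i: "i < q" and q2: "2 \<le> q"
  defines "nx \<equiv> \<lambda>i. (i + 1) mod q" and "pv \<equiv> \<lambda>i. (i + q - 1) mod q" and "sg \<equiv> \<lambda>i. (q - i) mod q"
  shows "sg (pv i) = nx (sg i)" "sg (nx i) = pv (sg i)" "sg (sg i) = i"
    "pv i < q" "nx i < q" "sg i < q"
proof -
  have lt: "pv i < q" "nx i < q" "sg i < q" using i unfolding nx_def pv_def sg_def by auto
  have e2: "nx j = (if j + 1 = q then 0 else j + 1)" "pv j = (if j = 0 then q - 1 else j - 1)"
     "sg j = (if j = 0 then 0 else q - j)" if "j < q" for j
    using that unfolding nx_def pv_def sg_def by (simp_all only: next_eq prev_eq sig_eq)
  note E = e2[OF i] e2[OF lt(1)] e2[OF lt(2)] e2[OF lt(3)]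
  show "sg (pv i) = nx (sg i)"
  proof (cases "i = 0")
    case True thus ?thesis using E q2 by simp
  next
    case False 
    hence "pv i = i - 1" "sg i = q - i" using E by simp_all
    thus ?thesis using e2[of "i - 1"] e2[of "q - i"] i False by (auto simp: Suc_diff_le)
  qed
  show "sg (nx i) = pv (sg i)"
  proof (cases "i + 1 = q")
    case True thus ?thesis using E q2 by auto
  next
    case False 
    hence "nx i = i + 1" using E by simp
    thus ?thesis using e2[of "i + 1"] e2[of "q - i"] e2[of 0] E i False q2 by (cases "i = 0") auto
  qed
  show "sg (sg i) = i"
  proof (cases "i = 0")
    case True thus ?thesis using E by simp
  next
    case False 
    hence "sg i = q - i" using E by simp
    thus ?thesis using e2[of "q - i"] i False by (auto simp: Suc_diff_le)
  qed
  show "pv i < q" "nx i < q" "sg i < q" by (rule lt)+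
qed



lemma bl_vd:
  fixes h :: "'a::real_normed_vector \<Rightarrow> real"
  assumes "bounded_linear h" "(f has_vector_derivative v) F"
  shows "((\<lambda>x. h (f x)) has_real_derivative h v) F"
proof -
  have "((\<lambda>x. h (f x)) has_derivative (\<lambda>x. h (x *\<^sub>R v))) F"
    using bounded_linear.has_derivative[OF assms(1)] assms(2) unfolding has_vector_derivative_def by blast
  moreover have "(\<lambda>x. h (x *\<^sub>R v)) = (*) (h v)"
    using real_vector.linear_scale[OF bounded_linear.linear[OF assms(1)]] by auto
  ultimately show ?thesis by (simp add: has_field_derivative_def)
qed

lemma refl_cont: "continuous_on S (reflection_line a u)"
  unfolding reflection_line_def by (intro continuous_intros)

lemma frontier_refl:
  assumes "open \<Omega>" "axially_symmetric \<Omega> a u" "x \<in> frontier \<Omega>"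
  shows "reflection_line a u x \<in> frontier \<Omega>"
proof -
  let ?R = "reflection_line a u"
  have n: "norm u = 1" and img: "?R ` \<Omega> = \<Omega>" using assms(2) by (auto simp: axially_symmetric_def)
  have fr: "frontier \<Omega> = closure \<Omega> - \<Omega>" using assms(1) by (simp add: frontier_def interior_open)
  have "?R ` closure \<Omega> \<subseteq> closure \<Omega>"
    by (rule image_closure_subset[OF refl_cont]) (use img closure_subset in auto)
  hence "?R x \<in> closure \<Omega>" using assms(3) fr by auto
  moreover have "?R x \<notin> \<Omega>"
  proof
    assume "?R x \<in> \<Omega>"
    hence "?R (?R x) \<in> \<Omega>" using img by blast
    thus False using refl_invol[OF n] assms(3) fr by auto
  qed
  ultimately show ?thesis using fr by auto
qed

lemma gamma_frontier:
  assumes "C1_boundary_param \<Omega> \<gamma> \<gamma>'"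
  shows "\<gamma> r \<in> frontier \<Omega>"
proof -
  have per: "\<And>t. \<gamma> (t + 1) = \<gamma> t" and img: "\<gamma> ` {0..<1} = frontier \<Omega>"
    using assms by (auto simp: C1_boundary_param_def)
  have pn: "\<gamma> (t + real n) = \<gamma> t" for t n
  proof (induction n)
    case (Suc n)
    have "t + real (Suc n) = (t + real n) + 1" by simp
    thus ?case using per Suc by metis
  qed simp
  define f where "f = r - of_int (floor r)"
  have f: "0 \<le> f" "f < 1" unfolding f_def by linarith+
  have "\<gamma> r = \<gamma> f"
  proof (cases "floor r \<ge> 0")
    case True
    hence "r = f + real (nat (floor r))" unfolding f_def by simp
    thus ?thesis using pn by metis
  next
    case False
    hence "f = r + real (nat (- floor r))" unfolding f_def by simp
    thus ?thesis using pn by metis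
  qed
  thus ?thesis using img f by auto
qed

lemma axis_contra:
  assumes sc: "strictly_convex_domain \<Omega>" and sym: "axially_symmetric \<Omega> a u"
    and x0: "x0 \<in> frontier \<Omega>" "reflection_line a u x0 = x0"
    and y1: "y1 \<in> frontier \<Omega>" and y2: "y2 \<in> frontier \<Omega>"
    and l1: "(y1 - x0) \<bullet> u > 0" and l2: "(y2 - x0) \<bullet> u < 0"
  shows False
proof -
  let ?R = "reflection_line a u"
  have op: "open \<Omega>" and cv: "convex \<Omega>" and strict: "\<forall>x\<in>closure \<Omega>. \<forall>y\<in>closure \<Omega>. x \<noteq> y \<longrightarrow> open_segment x y \<subseteq> \<Omega>"
    using sc by (auto simp: strictly_convex_domain_def)
  have n: "norm u = 1" using sym by (simp add: axially_symmetric_def)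
  have fc: "frontier \<Omega> \<subseteq> closure \<Omega>" by (simp add: frontier_def)
  define m where "m y = (1/2) *\<^sub>R y + (1/2) *\<^sub>R ?R y" for y
  have mc: "m y \<in> closure \<Omega>" if "y \<in> frontier \<Omega>" for y
  proof -
    have "?R y \<in> frontier \<Omega>" using frontier_refl[OF op sym that] .
    thus ?thesis unfolding m_def using convex_closure[OF cv] that fc
      by (intro convexD) auto
  qed
  have me: "m y = a + ((y - a) \<bullet> u) *\<^sub>R u" for y
    unfolding m_def reflection_line_def by (simp add: vec_eq_iff field_simps)
  have xe: "x0 = a + ((x0 - a) \<bullet> u) *\<^sub>R u"
  proof -
    have "x0 - a = (2 * ((x0 - a) \<bullet> u)) *\<^sub>R u - (x0 - a)"
      using x0(2) unfolding reflection_line_def by (simp add: algebra_simps)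
    hence "(x0 - a) + (x0 - a) = (2 * ((x0 - a) \<bullet> u)) *\<^sub>R u" by (simp only: eq_diff_eq)
    hence "2 *\<^sub>R (x0 - a) = (2 * ((x0 - a) \<bullet> u)) *\<^sub>R u" by (simp only: scaleR_2)
    hence "x0 - a = ((x0 - a) \<bullet> u) *\<^sub>R u" by (metis scaleR_scaleR real_vector.scale_cancel_left zero_neq_numeral)
    thus ?thesis by (simp add: algebra_simps)
  qed
  define lam1 where "lam1 = (y1 - a) \<bullet> u"
  define lam2 where "lam2 = (y2 - a) \<bullet> u"
  define lam0 where "lam0 = (x0 - a) \<bullet> u"
  have o: "lam2 < lam0" "lam0 < lam1" using l1 l2 unfolding lam1_def lam2_def lam0_def
    by (simp_all add: inner_diff_left)
  define \<theta> where "\<theta> = (lam1 - lam0) / (lam1 - lam2)"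
  have th: "0 < \<theta>" "\<theta> < 1" using o unfolding \<theta>_def by (auto simp: field_simps)
  have "\<theta> * (lam1 - lam2) = lam1 - lam0" using o unfolding \<theta>_def by simp
  moreover have "(1 - \<theta>) * lam1 + \<theta> * lam2 = lam1 - \<theta> * (lam1 - lam2)" by (simp add: algebra_simps)
  ultimately have thl: "(1 - \<theta>) * lam1 + \<theta> * lam2 = lam0" by simp
  have u0: "u \<noteq> 0" using n by auto
  have neq: "m y1 \<noteq> m y2"
  proof
    assume "m y1 = m y2"
    hence "lam1 *\<^sub>R u = lam2 *\<^sub>R u" unfolding me lam1_def lam2_def by simp
    hence "lam1 = lam2" using u0 by (simp add: scaleR_cancel_right)
    thus False using o by simp
  qed
  have "x0 = (1 - \<theta>) *\<^sub>R m y1 + \<theta> *\<^sub>R m y2"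
  proof -
    have "(1 - \<theta>) *\<^sub>R m y1 + \<theta> *\<^sub>R m y2 = a + ((1 - \<theta>) * lam1 + \<theta> * lam2) *\<^sub>R u"
      unfolding me lam1_def lam2_def by (simp add: algebra_simps)
    also have "\<dots> = x0" using thl xe unfolding lam0_def by simp
    finally show ?thesis by simp
  qed
  hence "x0 \<in> open_segment (m y1) (m y2)" using neq th by (auto simp: in_segment)
  hence "x0 \<in> \<Omega>" using strict mc[OF y1] mc[OF y2] neq by blast
  moreover have "x0 \<notin> \<Omega>" using x0(1) op by (simp add: frontier_def interior_open)
  ultimately show False by simp
qed

lemma axis_tangent:
  assumes sc: "strictly_convex_domain \<Omega>" and sym: "axially_symmetric \<Omega> a u"
    and par: "C1_boundary_param \<Omega> \<gamma> \<gamma>'"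
    and fx: "reflection_line a u (\<gamma> s) = \<gamma> s"
  shows "\<gamma>' s \<bullet> u = 0"
proof (rule ccontr)
  assume c: "\<gamma>' s \<bullet> u \<noteq> 0"
  define g where "g r = (\<gamma> r - \<gamma> s) \<bullet> u" for r
  have vd: "(\<gamma> has_vector_derivative \<gamma>' s) (at s)" using par by (simp add: C1_boundary_param_def)
  have "((\<lambda>r. (\<gamma> r - \<gamma> s) \<bullet> u) has_real_derivative (\<gamma>' s \<bullet> u)) (at s)"
  proof -
    have "((\<lambda>r. \<gamma> r \<bullet> u - \<gamma> s \<bullet> u) has_real_derivative (\<gamma>' s \<bullet> u - 0)) (at s)"
      by (intro DERIV_diff bl_vd[OF _ vd] bounded_linear_inner_left DERIV_const)
    thus ?thesis by (simp add: inner_diff_left)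
  qed
  hence D: "DERIV g s :> (\<gamma>' s \<bullet> u)" unfolding g_def .
  have g0: "g s = 0" unfolding g_def by simp
  have "\<exists>r1 r2. g r1 > 0 \<and> g r2 < 0"
  proof (cases "\<gamma>' s \<bullet> u > 0")
    case True
    obtain d1 where d1: "d1 > 0" "\<forall>h>0. h < d1 \<longrightarrow> g s < g (s + h)" using DERIV_pos_inc_right[OF D True] by blast
    obtain d2 where d2: "d2 > 0" "\<forall>h>0. h < d2 \<longrightarrow> g (s - h) < g s" using DERIV_pos_inc_left[OF D True] by blast
    have "g (s + d1/2) > 0" "g (s - d2/2) < 0" using d1 d2 g0 by auto
    thus ?thesis by blast
  next
    case False
    hence neg: "\<gamma>' s \<bullet> u < 0" using c by simp
    obtain d1 where d1: "d1 > 0" "\<forall>h>0. h < d1 \<longrightarrow> g s > g (s + h)" using DERIV_neg_dec_right[OF D neg] by blast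
    obtain d2 where d2: "d2 > 0" "\<forall>h>0. h < d2 \<longrightarrow> g s < g (s - h)" using DERIV_neg_dec_left[OF D neg] by blast
    have "g (s + d1/2) < 0" "g (s - d2/2) > 0" using d1 d2 g0 by auto
    thus ?thesis by blast
  qed
  then obtain r1 r2 where r: "g r1 > 0" "g r2 < 0" by blast
  show False
    using axis_contra[OF sc sym gamma_frontier[OF par] fx gamma_frontier[OF par] gamma_frontier[OF par]] r
    unfolding g_def by blast
qed



lemma area_deriv:
  fixes P :: "real \<Rightarrow> nat \<Rightarrow> real^2" and D :: "nat \<Rightarrow> real^2"
  assumes q: "q > 0" and d: "\<forall>i<q. \<forall>c. ((\<lambda>s. P s i $ c) has_real_derivative D i $ c) (at 0)"
  shows "((\<lambda>s. polygon_area q (P s)) has_real_derivative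
     (1/2) * (\<Sum>i<q. det2 (D i) (P 0 ((i+1) mod q)) + det2 (P 0 i) (D ((i+1) mod q)))) (at 0)"
proof -
  have t: "((\<lambda>s. det2 (P s i) (P s ((i+1) mod q))) has_real_derivative
      det2 (D i) (P 0 ((i+1) mod q)) + det2 (P 0 i) (D ((i+1) mod q))) (at 0)" if i: "i < q" for i
  proof -
    have i2: "(i+1) mod q < q" using q by simp
    note d1 = d[rule_format, OF i] and d2 = d[rule_format, OF i2]
    have d3: "((\<lambda>s. P s (Suc i mod q) $ c) has_real_derivative D (Suc i mod q) $ c) (at 0)" for c
      using d2 by simp
    show ?thesis unfolding det2_def
      by (auto intro!: derivative_eq_intros d1 d3 simp: algebra_simps)
  qed
  have "((\<lambda>s. (1/2) * (\<Sum>i<q. det2 (P s i) (P s ((i+1) mod q)))) has_real_derivative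
     (1/2) * (\<Sum>i<q. det2 (D i) (P 0 ((i+1) mod q)) + det2 (P 0 i) (D ((i+1) mod q)))) (at 0)"
    by (intro DERIV_cmult DERIV_sum t) simp
  thus ?thesis unfolding polygon_area_def .
qed

lemma refl_det_identity:
  assumes n: "norm u = 1"
  shows "det2 (Lin u w) (reflection_line a u x) + det2 (reflection_line a u y) (Lin u w) = det2 x w + det2 w y"
proof -
  have A: "det2 (Lin u w) (Lin u (x - a)) = - det2 w (x - a)" using det2_Lin[OF n] .
  have B: "det2 (Lin u (y - a)) (Lin u w) = - det2 (y - a) w" using det2_Lin[OF n] .
  have "det2 (Lin u w) (reflection_line a u x) + det2 (reflection_line a u y) (Lin u w)
     = det2 (Lin u w) a + det2 (Lin u w) (Lin u (x - a)) + det2 a (Lin u w) + det2 (Lin u (y - a)) (Lin u w)"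
    by (simp add: refl_aff[of a u] det2_add_left det2_add_right)
  also have "\<dots> = - det2 w (x - a) - det2 (y - a) w" using A B det2_swap[of a "Lin u w"] by simp
  also have "\<dots> = det2 x w + det2 w y" by (simp add: det2_def algebra_simps)
  finally show ?thesis .
qed

lemma det_tendsto:
  fixes P :: "real \<Rightarrow> nat \<Rightarrow> real^2"
  assumes "\<forall>i<q. ((\<lambda>s. P s i) \<longlongrightarrow> P 0 i) F" "i1 < q" "i2 < q" "i3 < q"
  shows "((\<lambda>s. det2 (P s i2 - P s i1) (P s i3 - P s i1)) \<longlongrightarrow> det2 (P 0 i2 - P 0 i1) (P 0 i3 - P 0 i1)) F"
  unfolding det2_def using assms by (intro tendsto_intros) auto

lemma idx_inv:
  fixes q i :: nat
  assumes i: "i < q"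
  shows "((i + 1) mod q + q - 1) mod q = i" "((i + q - 1) mod q + 1) mod q = i"
proof -
  have "((i + 1) mod q + q - 1) mod q = i \<and> ((i + q - 1) mod q + 1) mod q = i"
  proof (cases "i + 1 = q")
    case True
    hence "(i + 1) mod q = 0" by simp
    moreover have "(i + q - 1) mod q = i - 1 \<or> i = 0" using prev_eq[OF i] by auto
    ultimately show ?thesis using True prev_eq[of 0 q] next_eq[of "i - 1" q] i by (cases "i = 0") auto
  next
    case False
    hence a: "(i + 1) mod q = i + 1" "i + 1 < q" using next_eq[OF i] i by auto
    have b: "((i + 1) + q - 1) mod q = i" using prev_eq[OF a(2)] by simp
    show ?thesis
    proof (cases "i = 0")
      case True thus ?thesis using a b prev_eq[OF i] next_eq[of "q - 1" q] i by auto
    next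
      case False
      hence "(i + q - 1) mod q = i - 1" using prev_eq[OF i] by simp
      thus ?thesis using a b next_eq[of "i - 1" q] i False by auto
    qed
  qed
  thus "((i + 1) mod q + q - 1) mod q = i" "((i + q - 1) mod q + 1) mod q = i" by auto
qed



lemma vertex_opt:
  fixes \<Omega> :: "(real^2) set" and \<gamma> \<gamma>' :: "real \<Rightarrow> real^2"
    and a u P0 :: "real^2" and q :: nat and p :: "nat \<Rightarrow> real^2"
  assumes sc: "strictly_convex_domain \<Omega>"
    and par: "C1_boundary_param \<Omega> \<gamma> \<gamma>'"
    and sym: "axially_symmetric \<Omega> a u"
    and q2: "q \<ge> 2"
    and pin: "p \<in> sym_polygons \<Omega> a u P0 q"
    and mx: "\<forall>p' \<in> sym_polygons \<Omega> a u P0 q. polygon_area q p' \<le> polygon_area q p"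
    and Rp: "\<forall>i<q. reflection_line a u (p i) = p ((q - i) mod q)"
    and j: "j < q" and jk: "(q - j) mod q \<noteq> j" and t: "\<gamma> t = p j"
  shows "det2 (p ((j+1) mod q) - p ((j+q-1) mod q)) (\<gamma>' t) = 0"
proof -
  let ?R = "reflection_line a u"
  define nx where "nx i = (i + 1) mod q" for i
  define pv where "pv i = (i + q - 1) mod q" for i
  define sg where "sg i = (q - i) mod q" for i
  note IF = idx_facts[OF _ q2, folded nx_def pv_def sg_def]
  note II = idx_inv[folded nx_def pv_def]
  have n: "norm u = 1" using sym by (simp add: axially_symmetric_def)
  have op: "open \<Omega>" using sc by (simp add: strictly_convex_domain_def)
  have q0: "q > 0" using q2 by simp
  have pfr: "\<forall>j<q. p j \<in> frontier \<Omega>" and pinj: "inj_on p {..<q}"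
    and ppos: "\<forall>i j k. i < j \<and> j < k \<and> k < q \<longrightarrow> det2 (p j - p i) (p k - p i) > 0"
    and p0: "p 0 = P0"
    using pin by (auto simp: sym_polygons_def)
  define k where "k = sg j"
  have k: "k < q" "sg k = j" "k \<noteq> j" using IF[OF j] jk unfolding k_def sg_def by auto
  have j0: "j \<noteq> 0" using jk by (cases "j = 0") auto
  have k0: "k \<noteq> 0" proof assume "k = 0" thus False using k j0 unfolding sg_def by simp qed
  have Rpj: "?R (p j) = p k" using Rp j unfolding k_def sg_def by auto
  define w where "w = \<gamma>' t"
  define P where "P s i = (if i = j then \<gamma> (t + s) else if i = k then ?R (\<gamma> (t + s)) else p i)" for s i
  have P0: "P 0 = p" unfolding P_def using t Rpj by (auto simp: fun_eq_iff)
  have vd: "(\<gamma> has_vector_derivative w) (at t)" using par by (simp add: C1_boundary_param_def w_def)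
  have dg: "((\<lambda>s. \<gamma> (t + s) $ c) has_real_derivative w $ c) (at 0)" for c
  proof -
    have "((\<lambda>x. \<gamma> x $ c) has_real_derivative w $ c) (at (0 + t))"
      using bl_vd[OF bounded_linear_vec_nth vd] by simp
    thus ?thesis using DERIV_shift[of "\<lambda>x. \<gamma> x $ c" "w $ c" 0 t] by (simp add: add.commute)
  qed
  have dg': "((\<lambda>s. \<gamma> (s + t) $ c) has_real_derivative w $ c) (at 0)" for c
    using dg[of c] by (simp add: add.commute)
  define D where "D i = (if i = j then w else if i = k then Lin u w else 0)" for i
  have dR: "((\<lambda>s. ?R (\<gamma> (t + s)) $ c) has_real_derivative Lin u w $ c) (at 0)" for c
  proof -
    have e: "(\<lambda>s. ?R (\<gamma> (t + s)) $ c) = (\<lambda>s. a$c + 2*((\<gamma> (t + s) $ 1 - a$1)*u$1 + (\<gamma> (t + s) $ 2 - a$2)*u$2)*u$c - (\<gamma> (t + s) $ c - a$c))"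
      by (simp add: refl_comp inner2)
    show ?thesis unfolding e
      by (auto intro!: derivative_eq_intros dg dg' simp: Lin_def inner2 algebra_simps)
  qed
  have dP: "\<forall>i<q. \<forall>c. ((\<lambda>s. P s i $ c) has_real_derivative D i $ c) (at 0)"
    unfolding P_def D_def using dg dR by auto
  have lim: "\<forall>i<q. ((\<lambda>s. P s i) \<longlongrightarrow> P 0 i) (at 0)"
  proof (intro allI impI vec_tendstoI)
    fix i c assume "i < q"
    hence "isCont (\<lambda>s. P s i $ c) 0" using dP DERIV_isCont by blast
    thus "((\<lambda>s. P s i $ c) \<longlongrightarrow> P 0 i $ c) (at 0)" by (simp add: isCont_def)
  qed
  define T where "T = {(i1, i2, i3). i1 < i2 \<and> i2 < i3 \<and> i3 < q}"
  have Tf: "finite T" 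
    by (rule finite_subset[of _ "{..<q} \<times> {..<q} \<times> {..<q}"]) (auto simp: T_def)
  have ev1: "eventually (\<lambda>s. \<forall>(i1,i2,i3)\<in>T. det2 (P s i2 - P s i1) (P s i3 - P s i1) > 0) (at 0)"
  proof (rule eventually_ball_finite[OF Tf], safe)
    fix i1 i2 i3 assume "(i1, i2, i3) \<in> T"
    hence i: "i1 < i2" "i2 < i3" "i3 < q" by (auto simp: T_def)
    have "det2 (P 0 i2 - P 0 i1) (P 0 i3 - P 0 i1) > 0" using ppos i P0 by auto
    thus "eventually (\<lambda>s. det2 (P s i2 - P s i1) (P s i3 - P s i1) > 0) (at 0)"
      using order_tendstoD(1)[OF det_tendsto[OF lim, of i1 i2 i3]] i by auto
  qed
  define Q where "Q = {(i1, i2). i1 < q \<and> i2 < q \<and> i1 \<noteq> i2}"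
  have Qf: "finite Q" 
    by (rule finite_subset[of _ "{..<q} \<times> {..<q}"]) (auto simp: Q_def)
  have ev2: "eventually (\<lambda>s. \<forall>(i1,i2)\<in>Q. P s i1 - P s i2 \<noteq> 0) (at 0)"
  proof (rule eventually_ball_finite[OF Qf], safe)
    fix i1 i2 assume "(i1, i2) \<in> Q"
    hence i: "i1 < q" "i2 < q" "i1 \<noteq> i2" by (auto simp: Q_def)
    have "P 0 i1 - P 0 i2 \<noteq> 0" using pinj i P0 by (auto simp: inj_on_def)
    moreover have "((\<lambda>s. P s i1 - P s i2) \<longlongrightarrow> P 0 i1 - P 0 i2) (at 0)"
      using lim i by (intro tendsto_intros) auto
    ultimately show "eventually (\<lambda>s. P s i1 - P s i2 \<noteq> 0) (at 0)"
      using tendsto_imp_eventually_ne by blast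
  qed
  have inclass: "P s \<in> sym_polygons \<Omega> a u P0 q"
    if h1: "\<forall>(i1,i2,i3)\<in>T. det2 (P s i2 - P s i1) (P s i3 - P s i1) > 0"
    and h2: "\<forall>(i1,i2)\<in>Q. P s i1 - P s i2 \<noteq> 0" for s
  proof -
    have fr: "\<forall>i<q. P s i \<in> frontier \<Omega>"
      unfolding P_def using pfr gamma_frontier[OF par] frontier_refl[OF op sym] by auto
    have inj: "inj_on (P s) {..<q}"
      using h2 by (auto simp: inj_on_def Q_def)
    have pos: "\<forall>i1 i2 i3. i1 < i2 \<and> i2 < i3 \<and> i3 < q \<longrightarrow> det2 (P s i2 - P s i1) (P s i3 - P s i1) > 0"
      using h1 by (auto simp: T_def)
    have RP: "?R (P s i) = P s (sg i)" if i: "i < q" for i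
    proof -
      consider "i = j" | "i = k" | "i \<noteq> j" "i \<noteq> k" by blast
      thus ?thesis
      proof cases
        case 1 thus ?thesis using k unfolding P_def k_def by simp
      next
        case 2 thus ?thesis using k refl_invol[OF n] unfolding P_def by auto
      next
        case 3
        have "sg i \<noteq> j" using 3 IF[OF i] k_def by metis
        moreover have "sg i \<noteq> k" using 3 IF[OF i] k by metis
        ultimately show ?thesis using 3 Rp i unfolding P_def sg_def by auto
      qed
    qed
    have sgim: "sg ` {..<q} = {..<q}"
    proof
      show "sg ` {..<q} \<subseteq> {..<q}" using IF by auto
      show "{..<q} \<subseteq> sg ` {..<q}"
      proof
        fix i assume "i \<in> {..<q}"
        hence "i = sg (sg i)" "sg i \<in> {..<q}" using IF by auto
        thus "i \<in> sg ` {..<q}" by blast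
      qed
    qed
    have "?R ` (P s ` {..<q}) = P s ` (sg ` {..<q})"
      using RP by (auto simp: image_iff)
    hence img: "?R ` (P s ` {..<q}) = P s ` {..<q}" using sgim by simp
    have "P s 0 = P0" using j0 k0 p0 unfolding P_def by simp
    thus ?thesis using fr inj pos img unfolding sym_polygons_def by blast
  qed
  have ev: "eventually (\<lambda>s. polygon_area q (P s) \<le> polygon_area q p) (at 0)"
    using eventually_conj[OF ev1 ev2] by eventually_elim (use mx inclass in blast)
  then obtain d where d: "d > 0" "\<forall>s. s \<noteq> 0 \<and> dist s 0 < d \<longrightarrow> polygon_area q (P s) \<le> polygon_area q p"
    unfolding eventually_at by auto
  have le: "\<forall>y. \<bar>0 - y\<bar> < d \<longrightarrow> polygon_area q (P y) \<le> polygon_area q (P 0)"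
  proof (intro allI impI)
    fix y :: real assume "\<bar>0 - y\<bar> < d"
    thus "polygon_area q (P y) \<le> polygon_area q (P 0)"
      using d P0 by (cases "y = 0") (auto simp: dist_real_def)
  qed
  have z: "(1/2) * (\<Sum>i<q. det2 (D i) (P 0 ((i+1) mod q)) + det2 (P 0 i) (D ((i+1) mod q))) = 0"
    using DERIV_local_max[OF area_deriv[OF q0 dP] d(1) le] .
  have s1: "(\<Sum>i<q. det2 (D i) (p (nx i))) = det2 w (p (nx j)) + det2 (Lin u w) (p (nx k))"
  proof -
    have "(\<Sum>i<q. det2 (D i) (p (nx i))) = (\<Sum>i<q. (if i = j then det2 w (p (nx j)) else 0) + (if i = k then det2 (Lin u w) (p (nx k)) else 0))"
      by (rule sum.cong) (auto simp: D_def det2_def k)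
    also have "\<dots> = det2 w (p (nx j)) + det2 (Lin u w) (p (nx k))"
      by (simp add: sum.distrib j k)
    finally show ?thesis .
  qed
  have s2: "(\<Sum>i<q. det2 (p i) (D (nx i))) = det2 (p (pv j)) w + det2 (p (pv k)) (Lin u w)"
  proof -
    have e: "nx i = m \<longleftrightarrow> i = pv m" if "i < q" "m < q" for i m
      using II[OF that(1)] II[OF that(2)] that by (auto simp: nx_def pv_def)
    have "(\<Sum>i<q. det2 (p i) (D (nx i))) = (\<Sum>i<q. (if i = pv j then det2 (p (pv j)) w else 0) + (if i = pv k then det2 (p (pv k)) (Lin u w) else 0))"
    proof (rule sum.cong)
      fix i assume "i \<in> {..<q}"
      hence i: "i < q" by simp
      have "pv j \<noteq> pv k"
      proof
        assume "pv j = pv k"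
        hence "nx (pv j) = nx (pv k)" by simp
        thus False using II(2)[OF j] II(2)[OF k(1)] k(3) unfolding nx_def pv_def by simp
      qed
      thus "det2 (p i) (D (nx i)) = (if i = pv j then det2 (p (pv j)) w else 0) + (if i = pv k then det2 (p (pv k)) (Lin u w) else 0)"
        using e[OF i j] e[OF i k(1)] k unfolding D_def by (auto simp: det2_def)
    qed simp
    also have "\<dots> = det2 (p (pv j)) w + det2 (p (pv k)) (Lin u w)"
      using IF(4)[OF j] IF(4)[OF k(1)] by (simp add: sum.distrib)
    finally show ?thesis .
  qed
  have pnk: "p (nx k) = ?R (p (pv j))"
  proof -
    have "?R (p (pv j)) = p (sg (pv j))" using Rp IF(4)[OF j] unfolding sg_def by simp
    also have "sg (pv j) = nx k" using IF(1)[OF j] k_def by simp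
    finally show ?thesis by simp
  qed
  have ppk: "p (pv k) = ?R (p (nx j))"
  proof -
    have "?R (p (nx j)) = p (sg (nx j))" using Rp IF(5)[OF j] unfolding sg_def by simp
    also have "sg (nx j) = pv k" using IF(2)[OF j] k_def by simp
    finally show ?thesis by simp
  qed
  have "0 = (1/2) * ((\<Sum>i<q. det2 (D i) (p (nx i))) + (\<Sum>i<q. det2 (p i) (D (nx i))))"
    using z P0 unfolding nx_def by (simp add: sum.distrib)
  also have "\<dots> = (1/2) * (det2 w (p (nx j)) + det2 (p (pv j)) w + 
      (det2 (Lin u w) (?R (p (pv j))) + det2 (?R (p (nx j))) (Lin u w)))"
    unfolding s1 s2 pnk ppk by (simp add: algebra_simps)
  also have "\<dots> = det2 w (p (nx j)) + det2 (p (pv j)) w"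
    unfolding refl_det_identity[OF n] by simp
  also have "\<dots> = - det2 (p (nx j) - p (pv j)) w" by (simp add: det2_def algebra_simps)
  finally show ?thesis unfolding nx_def pv_def w_def by simp
qed



lemma nx_pv_sg:
  fixes q j :: nat
  assumes j: "j < q" and q2: "2 \<le> q" and e: "(j + 1) mod q = (j + q - 1) mod q"
  shows "(q - j) mod q = j"
proof (cases "j = 0")
  case True thus ?thesis by simp
next
  case False
  hence pv: "(j + q - 1) mod q = j - 1" using prev_eq[OF j] by simp
  show ?thesis
  proof (cases "j + 1 = q")
    case True
    hence "j - 1 = 0" using e pv by simp
    hence "j = 1" "q = 2" using False True by auto
    thus ?thesis by simp
  next
    case False
    hence "j + 1 = j - 1" using e pv next_eq[OF j] by simp
    thus ?thesis by simp
  qed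
qed

theorem proposition3p3:
  fixes \<Omega> :: "(real^2) set" and \<gamma> \<gamma>' :: "real \<Rightarrow> real^2"
    and a u P0 :: "real^2" and q :: nat and p :: "nat \<Rightarrow> real^2"
  assumes "strictly_convex_domain \<Omega>"
    and "C1_boundary_param \<Omega> \<gamma> \<gamma>'"
    and "axially_symmetric \<Omega> a u"
    and "P0 \<in> frontier \<Omega>" and "reflection_line a u P0 = P0"
    and "q \<ge> 2"
    and "p \<in> sym_polygons \<Omega> a u P0 q"
    and "\<forall>p' \<in> sym_polygons \<Omega> a u P0 q. polygon_area q p' \<le> polygon_area q p"
  shows "symplectic_periodic_orbit \<Omega> \<gamma> \<gamma>' q p"
proof -
  note sc = assms(1) and par = assms(2) and sym = assms(3) and q2 = assms(6) and pin = assms(7) and mx = assms(8)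
  let ?R = "reflection_line a u"
  define nx where "nx i = (i + 1) mod q" for i
  define pv where "pv i = (i + q - 1) mod q" for i
  define sg where "sg i = (q - i) mod q" for i
  note IF = idx_facts[OF _ q2, folded nx_def pv_def sg_def]
  note II = idx_inv[folded nx_def pv_def]
  have n: "norm u = 1" using sym by (simp add: axially_symmetric_def)
  have u0: "u \<noteq> 0" using n by auto
  have q0: "q > 0" using q2 by simp
  have pfr: "\<forall>j<q. p j \<in> frontier \<Omega>" and pinj: "inj_on p {..<q}"
    and ppos: "\<forall>i j k. i < j \<and> j < k \<and> k < q \<longrightarrow> det2 (p j - p i) (p k - p i) > 0"
    and pimg: "?R ` (p ` {..<q}) = p ` {..<q}"
    and p0: "p 0 = P0"
    using pin by (auto simp: sym_polygons_def)
  have finj: "inj ?R" by (rule injI) (metis refl_invol[OF n])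
  have rev: "det2 (?R y - ?R x) (?R z - ?R x) = - det2 (y - x) (z - x)" for x y z
    by (simp add: refl_diff det2_Lin[OF n])
  have Rp: "\<forall>i<q. ?R (p i) = p ((q - i) mod q)"
    by (rule sym_index[OF pinj finj ppos pimg _ rev q0]) (simp add: p0 assms(5))
  have Rp': "?R (p i) = p (sg i)" if "i < q" for i using Rp that unfolding sg_def by simp
  have gimg: "\<gamma> ` {0..<1} = frontier \<Omega>" using par by (simp add: C1_boundary_param_def)
  have perp_diff: "(?R y - y) \<bullet> u = 0" for y
    using refl_inner[OF n, of a y] by (simp add: inner_diff_left)
  show ?thesis unfolding symplectic_periodic_orbit_def
  proof (intro allI impI)
    fix j assume j: "j < q"
    have pvj: "pv j \<noteq> j"
    proof
      assume "pv j = j"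
      thus False using prev_eq[OF j] q2 unfolding pv_def by (cases "j = 0") auto
    qed
    have nxj: "nx j \<noteq> j"
    proof
      assume h: "nx j = j"
      have "pv (nx j) = j" using II(1)[OF j] unfolding nx_def pv_def .
      thus False using h pvj by simp
    qed
    have fr: "p (pv j) \<in> frontier \<Omega>" "p j \<in> frontier \<Omega>" "p (nx j) \<in> frontier \<Omega>"
      using pfr IF(4,5)[OF j] j by auto
    have ne: "p (pv j) \<noteq> p j" "p j \<noteq> p (nx j)"
      using pinj IF(4,5)[OF j] j pvj nxj by (auto simp: inj_on_def)
    obtain t where t: "\<gamma> t = p j" using fr(2) gimg by (metis imageE)
    have main: "det2 (p (nx j) - p (pv j)) (\<gamma>' t) = 0 \<and>
       (p (nx j) = p (pv j) \<longrightarrow> (\<exists>s. \<gamma> s = p (pv j) \<and> det2 (\<gamma>' s) (\<gamma>' t) = 0))"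
    proof (cases "sg j = j")
      case True
      have tg: "\<gamma>' t \<bullet> u = 0"
        using axis_tangent[OF sc sym par] Rp'[OF j] True t by simp
      have pn: "p (nx j) = ?R (p (pv j))"
        using Rp'[OF IF(4)[OF j]] IF(1)[OF j] True by simp
      have d1: "det2 (p (nx j) - p (pv j)) (\<gamma>' t) = 0"
        using det2_perp[OF perp_diff tg u0] pn by simp
      have d2: "\<exists>s. \<gamma> s = p (pv j) \<and> det2 (\<gamma>' s) (\<gamma>' t) = 0" if h: "p (nx j) = p (pv j)"
      proof -
        have "nx j = pv j" using h pinj IF(4,5)[OF j] by (auto simp: inj_on_def)
        hence "sg (pv j) = pv j" using IF(1)[OF j] True by simp
        hence fx: "?R (p (pv j)) = p (pv j)" using Rp'[OF IF(4)[OF j]] by simp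
        obtain s where s: "\<gamma> s = p (pv j)" using fr(1) gimg by (metis imageE)
        have "\<gamma>' s \<bullet> u = 0" using axis_tangent[OF sc sym par] fx s by simp
        thus ?thesis using det2_perp[OF _ tg u0] s by blast
      qed
      show ?thesis using d1 d2 by blast
    next
      case False
      have d1: "det2 (p (nx j) - p (pv j)) (\<gamma>' t) = 0"
        using vertex_opt[OF sc par sym q2 pin mx Rp j _ t] False unfolding nx_def pv_def sg_def by simp
      have "p (nx j) \<noteq> p (pv j)"
      proof
        assume h: "p (nx j) = p (pv j)"
        have "nx j = pv j" using h pinj IF(4,5)[OF j] by (auto simp: inj_on_def)
        hence "sg j = j" using nx_pv_sg[OF j q2] unfolding nx_def pv_def sg_def by simp
        thus False using False by simp
      qed
      thus ?thesis using d1 by blast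
    qed
    show "consecutive_bounces \<Omega> \<gamma> \<gamma>' (p ((j + q - 1) mod q)) (p j) (p ((j + 1) mod q))"
      unfolding consecutive_bounces_def using fr ne main t unfolding nx_def pv_def by blast
  qed
qed


end
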